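(* Let $G$ be either the line network $L_n$ with $n\ge 2$ or the ring network $C_n$ with $n\ge 3$. Suppose a group-testing measurement matrix $A$ for $G$ (in the sense defined in the context) distinguishes all binary vectors $x\in\{0,1\}^n$ having at most two ones, meaning that distinct such vectors produce distinct outcome vectors. Then $A$ has at least $n$ rows.
   Context: The line network $L_n$ on nodes $\{1,\dots,n\}$ has edges $\{i,i+1\}$ for $1\le i\le n-1$. The ring network $C_n$ additionally has the edge $\{n,1\}$. A group-testing measurement matrix for a graph $G$ on $\{1,\dots,n\}$ is a matrix $A\in\{0,1\}^{m\times n}$ in which every nonzero row has a support that induces a connected subgraph of $G$. Given $x\in\{0,1\}^n$, the outcome of row $i$ is the Boolean OR $\bigvee_{j:A_{ij}=1}x_j$. *)

theory Defs
  imports Main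
begin

text \<open>Graphs on the node set {1..n}, given by a set of undirected edges (2-element sets).\<close>

definition line_edges :: "nat \<Rightarrow> nat set set" where
  "line_edges n = {{i, i+1} | i. 1 \<le> i \<and> i \<le> n - 1}"

definition ring_edges :: "nat \<Rightarrow> nat set set" where
  "ring_edges n = line_edges n \<union> {{n, 1}}"

definition induces_connected :: "nat set set \<Rightarrow> nat set \<Rightarrow> bool" where
  "induces_connected E S \<longleftrightarrow>
     (\<forall>u\<in>S. \<forall>v\<in>S. (u, v) \<in> ({(a, b). a \<in> S \<and> b \<in> S \<and> {a, b} \<in> E})\<^sup>*)"

text \<open>A matrix with m rows over columns {1..n}: row i (i < m) has entries A i j, j \<in> {1..n}.\<close>
definition row_support :: "(nat \<Rightarrow> nat \<Rightarrow> bool) \<Rightarrow> nat \<Rightarrow> nat \<Rightarrow> nat set" where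
  "row_support A n i = {j \<in> {1..n}. A i j}"

definition gt_matrix :: "nat \<Rightarrow> nat set set \<Rightarrow> nat \<Rightarrow> (nat \<Rightarrow> nat \<Rightarrow> bool) \<Rightarrow> bool" where
  "gt_matrix n E m A \<longleftrightarrow>
     (\<forall>i<m. row_support A n i \<noteq> {} \<longrightarrow> induces_connected E (row_support A n i))"

text \<open>Binary vectors in {0,1}^n, represented by their support (subset of {1..n}).\<close>
definition outcome :: "(nat \<Rightarrow> nat \<Rightarrow> bool) \<Rightarrow> nat \<Rightarrow> nat \<Rightarrow> nat set \<Rightarrow> nat \<Rightarrow> bool" where
  "outcome A n m X = (\<lambda>i. i < m \<and> (\<exists>j\<in>{1..n}. A i j \<and> j \<in> X))"

definition distinguishes_2 :: "nat \<Rightarrow> nat \<Rightarrow> (nat \<Rightarrow> nat \<Rightarrow> bool) \<Rightarrow> bool" where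
  "distinguishes_2 n m A \<longleftrightarrow>
     (\<forall>X Y. X \<subseteq> {1..n} \<and> card X \<le> 2 \<and> Y \<subseteq> {1..n} \<and> card Y \<le> 2 \<and> X \<noteq> Y
        \<longrightarrow> outcome A n m X \<noteq> outcome A n m Y)"

end

theory Submission
  imports Defs
begin

lemma conn_block:
  assumes c: "induces_connected E S" and "j \<notin> S" "k \<notin> S" "a \<in> S" "j < a" "a < k" "b \<in> S"
    and ed: "\<forall>x y. j < x \<and> x < k \<and> {x, y} \<in> E \<longrightarrow> y = x + 1 \<or> y + 1 = x"
  shows "j < b \<and> b < k"
proof -
  let ?R = "{(a, b). a \<in> S \<and> b \<in> S \<and> {a, b} \<in> E}"
  have "(a, b) \<in> ?R\<^sup>*" using c assms(4,7) unfolding induces_connected_def by blast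
  then show ?thesis
  proof (induction rule: rtrancl_induct)
    case base then show ?case using assms by simp
  next
    case (step y z)
    then have "z \<in> S" "{y, z} \<in> E" by auto
    with step ed have "z = y + 1 \<or> z + 1 = y" by blast
    moreover have "z \<noteq> j" "z \<noteq> k" using \<open>z \<in> S\<close> assms(2,3) by auto
    ultimately show ?case using step.IH by auto
  qed
qed

lemma row_exists:
  assumes d: "distinguishes_2 n m A" and gt: "gt_matrix n E m A"
    and X: "X \<subseteq> {1..n}" "card X \<le> 2" and Y: "Y = insert s X" "s \<in> {1..n}" "s \<notin> X" "card Y \<le> 2"
  shows "\<exists>i<m. s \<in> row_support A n i \<and> (\<forall>x\<in>X. x \<notin> row_support A n i)
     \<and> induces_connected E (row_support A n i)"
proof -
  have "outcome A n m X \<noteq> outcome A n m Y"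
  proof -
    have "X \<noteq> Y" using Y by auto
    moreover have "Y \<subseteq> {1..n}" using X Y by auto
    ultimately show ?thesis using d X Y(4) unfolding distinguishes_2_def by blast
  qed
  then obtain i where "outcome A n m X i \<noteq> outcome A n m Y i" by blast
  then have i: "i < m" "\<exists>j\<in>{1..n}. A i j \<and> j \<in> Y" "\<not> (\<exists>j\<in>{1..n}. A i j \<and> j \<in> X)"
    unfolding outcome_def using Y by auto
  then have "s \<in> row_support A n i" "\<forall>x\<in>X. x \<notin> row_support A n i"
    using Y unfolding row_support_def by auto
  moreover then have "induces_connected E (row_support A n i)"
    using gt i(1) unfolding gt_matrix_def by auto
  ultimately show ?thesis using i(1) by blast
qed

theorem mainTheorem2:
  fixes n m :: nat and A :: "nat \<Rightarrow> nat \<Rightarrow> bool" and E :: "nat set set"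
  assumes "(E = line_edges n \<and> n \<ge> 2) \<or> (E = ring_edges n \<and> n \<ge> 3)"
    and "gt_matrix n E m A"
    and "distinguishes_2 n m A"
  shows "m \<ge> n"
  using assms(1)
proof
  assume h: "E = line_edges n \<and> n \<ge> 2"
  have ex: "\<exists>i<m. j + 1 \<in> row_support A n i \<and> j \<notin> row_support A n i
     \<and> induces_connected E (row_support A n i)" if "j \<in> {0..<n}" for j
  proof -
    have "\<exists>i<m. j+1 \<in> row_support A n i \<and> (\<forall>x\<in>{1..n} \<inter> {j}. x \<notin> row_support A n i)
     \<and> induces_connected E (row_support A n i)"
      apply (rule row_exists[OF assms(3) assms(2), where Y = "insert (j+1) ({1..n} \<inter> {j})"])
      using that card_mono[of "{j}" "{1..n} \<inter> {j}"] by (auto simp: card_insert_if)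
    then show ?thesis unfolding row_support_def by auto
  qed
  obtain f where f: "\<And>j. j \<in> {0..<n} \<Longrightarrow> f j < m \<and> j + 1 \<in> row_support A n (f j) \<and> j \<notin> row_support A n (f j)
     \<and> induces_connected E (row_support A n (f j))"
    using ex by metis
  have edges: "\<forall>x y. j < x \<and> x < k \<and> {x, y} \<in> E \<longrightarrow> y = x + 1 \<or> y + 1 = x" for j k
    using h unfolding line_edges_def by (auto simp: doubleton_eq_iff)
  have "inj_on f {0..<n}"
  proof (rule inj_onI)
    fix j k assume jk: "j \<in> {0..<n}" "k \<in> {0..<n}" "f j = f k"
    show "j = k"
    proof (rule ccontr)
      assume "j \<noteq> k"
      then have "j < k \<or> k < j" by auto
      then show False
      proof
        assume "j < k"
        have "j + 1 \<noteq> k" using f[OF jk(1)] f[OF jk(2)] jk(3) by auto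
        then show False using conn_block[OF _ _ _ _ _ _ _ edges, of "row_support A n (f j)" j k "j+1" "k+1"]
          f[OF jk(1)] f[OF jk(2)] jk(3) \<open>j<k\<close> by auto
      next
        assume "k < j"
        have "k + 1 \<noteq> j" using f[OF jk(1)] f[OF jk(2)] jk(3) by auto
        then show False using conn_block[OF _ _ _ _ _ _ _ edges, of "row_support A n (f k)" k j "k+1" "j+1"]
          f[OF jk(1)] f[OF jk(2)] jk(3) \<open>k<j\<close> by auto
      qed
    qed
  qed
  moreover have "f ` {0..<n} \<subseteq> {..<m}" using f by auto
  ultimately have "card {0..<n} \<le> card {..<m}" by (meson card_inj_on_le finite_lessThan)
  then show ?thesis by simp
next
  assume h: "E = ring_edges n \<and> n \<ge> 3"
  define sc where "sc j = (if j = n then 1 else j + 1)" for j :: nat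
  have ex: "\<exists>i<m. sc j \<in> row_support A n i \<and> j \<notin> row_support A n i
     \<and> induces_connected E (row_support A n i)" if "j \<in> {1..n}" for j
  proof -
    have "\<exists>i<m. sc j \<in> row_support A n i \<and> (\<forall>x\<in>{j}. x \<notin> row_support A n i)
     \<and> induces_connected E (row_support A n i)"
      apply (rule row_exists[OF assms(3) assms(2), where Y = "insert (sc j) {j}"])
      using that h by (auto simp: sc_def card_insert_if)
    then show ?thesis by auto
  qed
  obtain f where f: "\<And>j. j \<in> {1..n} \<Longrightarrow> f j < m \<and> sc j \<in> row_support A n (f j) \<and> j \<notin> row_support A n (f j)
     \<and> induces_connected E (row_support A n (f j))"
    using ex by metis
  have edges: "\<forall>x y. j < x \<and> x < k \<and> {x, y} \<in> E \<longrightarrow> y = x + 1 \<or> y + 1 = x"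
    if "1 \<le> j" "k \<le> n" for j k
    using h that unfolding ring_edges_def line_edges_def by (auto simp: doubleton_eq_iff)
  have key: False if "j \<in> {1..n}" "k \<in> {1..n}" "f j = f k" "j < k" for j k
  proof -
    have scj: "sc j = j + 1" using that by (auto simp: sc_def)
    have "j + 1 \<noteq> k" using f[OF that(1)] f[OF that(2)] that(3,4) scj by auto
    then show False
      using conn_block[where S="row_support A n (f j)" and j=j and k=k and a="j+1" and b="sc k", OF _ _ _ _ _ _ _ edges]
        f[OF that(1)] f[OF that(2)] that by (auto simp: sc_def split: if_splits)
  qed
  have "inj_on f {1..n}"
    by (rule inj_onI) (metis key linorder_neqE_nat)
  moreover have "f ` {1..n} \<subseteq> {..<m}" using f by auto
  ultimately have "card {1..n} \<le> card {..<m}" by (meson card_inj_on_le finite_lessThan)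
  then show ?thesis by simp
qed

end
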